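(* If $A$ is a doubly nonnegative matrix with at most three distinct eigenvalues, then $A^t$ is doubly nonnegative for all $t\ge 1$.
   Context: A real matrix is doubly nonnegative if it is symmetric, positive semidefinite, and entry-wise nonnegative. For positive semidefinite $A=\sum_i\lambda_ix_ix_i^T$ (orthonormal eigenvectors, $\lambda_i\ge 0$) and $t>0$, $A^t=\sum_i\lambda_i^tx_ix_i^T$. *)

theory Defs
  imports "HOL-Analysis.Analysis"
begin

definition symmetric_mat :: "real^'n^'n \<Rightarrow> bool" where
  "symmetric_mat A \<longleftrightarrow> transpose A = A"

definition psd_mat :: "real^'n^'n \<Rightarrow> bool" where
  "psd_mat A \<longleftrightarrow> symmetric_mat A \<and> (\<forall>x. 0 \<le> x \<bullet> (A *v x))"

definition nonneg_mat :: "real^'n^'n \<Rightarrow> bool" where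
  "nonneg_mat A \<longleftrightarrow> (\<forall>i j. 0 \<le> A $ i $ j)"

definition doubly_nonnegative :: "real^'n^'n \<Rightarrow> bool" where
  "doubly_nonnegative A \<longleftrightarrow> symmetric_mat A \<and> psd_mat A \<and> nonneg_mat A"

definition eigenvalues_of :: "real^'n^'n \<Rightarrow> real set" where
  "eigenvalues_of A = {l. \<exists>v. v \<noteq> 0 \<and> A *v v = l *\<^sub>R v}"

definition outer_prod :: "real^'n \<Rightarrow> real^'n \<Rightarrow> real^'n^'n" where
  "outer_prod u v = (\<chi> a b. u $ a * v $ b)"

text \<open>A = sum_i lam_i x_i x_i^T with (x_i) an orthonormal family of eigenvectors
  (indexed by 'n, hence a basis) and lam_i \<ge> 0.\<close>
definition psd_eigendecomp :: "real^'n^'n \<Rightarrow> ('n \<Rightarrow> real) \<Rightarrow> ('n \<Rightarrow> real^'n) \<Rightarrow> bool" where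
  "psd_eigendecomp A lam x \<longleftrightarrow>
     (\<forall>i j. x i \<bullet> x j = (if i = j then 1 else 0)) \<and>
     (\<forall>i. 0 \<le> lam i) \<and>
     A = (\<Sum>i\<in>UNIV. lam i *\<^sub>R outer_prod (x i) (x i))"

text \<open>A^t = sum_i lam_i^t x_i x_i^T (independent of the chosen decomposition).\<close>
definition mat_rpow :: "real^'n^'n \<Rightarrow> real \<Rightarrow> real^'n^'n" where
  "mat_rpow A t = (SOME B. \<exists>lam x. psd_eigendecomp A lam x \<and>
       B = (\<Sum>i\<in>UNIV. (lam i powr t) *\<^sub>R outer_prod (x i) (x i)))"

end

theory Submission
  imports Defs
begin


lemma powr_conc_on: assumes "0 < r" "r \<le> 1" shows "concave_on {0<..} (\<lambda>x::real. x powr r)"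
proof (rule f''_le0_imp_concave[where f'="\<lambda>x. r * x powr (r - 1)" and f''="\<lambda>x. r * ((r - 1) * x powr (r - 1 - 1))"])
  show "convex {0::real<..}" by simp
  fix x :: real assume x: "x \<in> {0<..}"
  show "((\<lambda>x. x powr r) has_real_derivative r * x powr (r - 1)) (at x)"
    using x by (auto intro!: derivative_eq_intros)
  show "((\<lambda>x. r * x powr (r - 1)) has_real_derivative r * ((r - 1) * x powr (r - 1 - 1))) (at x)"
    using x by (auto intro!: derivative_eq_intros)
  show "r * ((r - 1) * x powr (r - 1 - 1)) \<le> 0"
    using x assms by (intro mult_nonneg_nonpos mult_nonpos_nonneg) auto
qed

lemma conv_ineq:
  fixes a b c s :: real
  assumes "0 \<le> a" "a < b" "b < c" "1 \<le> s"
  shows "b powr s * (c - a) \<le> a powr s * (c - b) + c powr s * (b - a)"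
proof (cases "a = 0")
  case True
  have "b powr (s-1) \<le> c powr (s-1)" using assms by (intro powr_mono2) auto
  hence "b * b powr (s-1) * c \<le> b * (c * c powr (s-1))" using assms True
    by (simp add: mult_left_mono mult.commute mult.left_commute)
  moreover have "b powr s = b * b powr (s-1)" "c powr s = c * c powr (s-1)"
    using assms by (simp_all add: powr_mult_base)
  ultimately show ?thesis using True by (simp add: algebra_simps)
next
  case False
  define th where "th = (b - a) / (c - a)"
  have th: "0 \<le> th" "th \<le> 1" using assms by (auto simp: th_def field_simps)
  have hth: "th * (c - a) = b - a" using assms by (simp add: th_def)
  hence bb: "b = (1 - th) *\<^sub>R a + th *\<^sub>R c" by (simp add: algebra_simps)
  have "b powr s \<le> (1 - th) * a powr s + th * c powr s"
    using convex_onD[OF powr_convex[OF assms(4)] th] assms False bb by auto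
  hence "b powr s * (c - a) \<le> ((1 - th) * a powr s + th * c powr s) * (c - a)"
    using assms by (intro mult_right_mono) auto
  also have "\<dots> = a powr s * (c - a) + (c powr s - a powr s) * (th * (c - a))" by (simp add: algebra_simps)
  also have "\<dots> = a powr s * (c - b) + c powr s * (b - a)"
    unfolding hth by (simp add: algebra_simps)
  finally show ?thesis .
qed

lemma conc_ineq:
  fixes a b c r :: real
  assumes "0 \<le> a" "a < b" "b < c" "0 < r" "r \<le> 1"
  shows "b powr r * (c - a) \<ge> a powr r * (c - b) + c powr r * (b - a)"
proof (cases "a = 0")
  case True
  have "c powr (r-1) \<le> b powr (r-1)" using assms by (intro powr_mono2') auto
  hence "b * c powr (r-1) * c \<le> b * (c * b powr (r-1))" using assms True
    by (simp add: mult_left_mono mult.commute mult.left_commute)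
  moreover have "b powr r = b * b powr (r-1)" "c powr r = c * c powr (r-1)"
    using assms by (simp_all add: powr_mult_base)
  ultimately show ?thesis using True by (simp add: algebra_simps)
next
  case False
  define th where "th = (b - a) / (c - a)"
  have th: "0 \<le> th" "th \<le> 1" using assms by (auto simp: th_def field_simps)
  have hth: "th * (c - a) = b - a" using assms by (simp add: th_def)
  hence bb: "b = (1 - th) *\<^sub>R a + th *\<^sub>R c" by (simp add: algebra_simps)
  have "b powr r \<ge> (1 - th) * a powr r + th * c powr r"
    using concave_onD[OF powr_conc_on[OF assms(4,5)] th] assms False bb by auto
  hence "b powr r * (c - a) \<ge> ((1 - th) * a powr r + th * c powr r) * (c - a)"
    using assms by (intro mult_right_mono) auto
  also have "((1 - th) * a powr r + th * c powr r) * (c - a) = a powr r * (c - a) + (c powr r - a powr r) * (th * (c - a))" by (simp add: algebra_simps)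
  also have "\<dots> = a powr r * (c - b) + c powr r * (b - a)"
    unfolding hth by (simp add: algebra_simps)
  finally show ?thesis .
qed

lemma sq_powr: "0 \<le> (a::real) \<Longrightarrow> (a^2) powr (s/2) = a powr s"
proof (cases "a = 0")
  case False
  assume "0 \<le> a"
  hence "a > 0" using False by simp
  hence e: "a^2 = a powr 2" by (simp add: powr_realpow)
  have "(a^2) powr (s/2) = (a powr 2) powr (s/2)" by (simp only: e)
  also have "\<dots> = a powr (2 * (s/2))" by (rule powr_powr)
  also have "\<dots> = a powr s" by simp
  finally show ?thesis .
qed simp

lemma interp3:
  fixes a b c s :: real
  assumes "0 \<le> a" "a < b" "b < c" "1 \<le> s" "s \<le> 2"
  shows "\<exists>g be de. 0 \<le> be \<and> 0 \<le> de \<and> (\<forall>e\<in>{a,b,c}. e powr s = g + be * e + de * e^2)"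
proof -
  let ?f = "\<lambda>x. x powr s"
  define d1 where "d1 = (?f b - ?f a) / (b - a)"
  define d2 where "d2 = (?f c - ?f b) / (c - b)"
  define de where "de = (d2 - d1) / (c - a)"
  define be where "be = d1 - de * (a + b)"
  define g where "g = ?f a - be * a - de * a^2"
  have cv: "?f b * (c - a) \<le> ?f a * (c - b) + ?f c * (b - a)" using conv_ineq assms by auto
  have cc0: "(b^2) powr (s/2) * (c^2 - a^2) \<ge> (a^2) powr (s/2) * (c^2 - b^2) + (c^2) powr (s/2) * (b^2 - a^2)"
  proof (rule conc_ineq)
    show "a^2 < b^2" using assms by (intro power_strict_mono) auto
    show "b^2 < c^2" using assms by (intro power_strict_mono) auto
  qed (use assms in auto)
  have cc: "?f b * (c^2 - a^2) \<ge> ?f a * (c^2 - b^2) + ?f c * (b^2 - a^2)"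
    using cc0 assms by (simp add: sq_powr)
  have "0 \<le> de"
  proof -
    have h1: "d1 * (b-a) = ?f b - ?f a" using assms by (simp add: d1_def)
    have h2: "d2 * (c-b) = ?f c - ?f b" using assms by (simp add: d2_def)
    have "d1 * ((b-a)*(c-b)) = (d1 * (b-a))*(c-b)" by (simp only: mult.assoc)
    also have "\<dots> = (?f b - ?f a) * (c-b)" unfolding h1 ..
    also have "\<dots> \<le> (?f c - ?f b) * (b - a)" using cv by (simp add: algebra_simps)
    also have "\<dots> = (d2 * (c-b)) * (b - a)" unfolding h2 ..
    also have "\<dots> = d2 * ((b-a)*(c-b))" by (simp only: mult_ac)
    finally have "d1 * ((b-a)*(c-b)) \<le> d2 * ((b-a)*(c-b))" .
    moreover have "(b-a)*(c-b) > 0" using assms by simp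
    ultimately have "d1 \<le> d2" by (meson mult_le_cancel_right_pos)
    thus ?thesis using assms by (simp add: de_def)
  qed
  moreover have "0 \<le> be"
  proof -
    have h1: "d1 * (b-a) = ?f b - ?f a" using assms by (simp add: d1_def)
    have h2: "d2 * (c-b) = ?f c - ?f b" using assms by (simp add: d2_def)
    have h3: "de * (c-a) = d2 - d1" using assms by (simp add: de_def)
    have "be * ((b-a)*(c-b)*(c-a)) = ?f b * (c^2 - a^2) - ?f a * (c^2 - b^2) - ?f c * (b^2 - a^2)"
    proof -
      have "be * ((b-a)*(c-b)*(c-a)) = (d1*(b-a))*(c-b)*(c-a) - (a+b)*(b-a)*(c-b)*(de*(c-a))"
        unfolding be_def by (simp add: algebra_simps)
      also have "\<dots> = (d1*(b-a))*(c-b)*(c-a) - (a+b)*((b-a)*(d2*(c-b)) - (c-b)*(d1*(b-a)))"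
        unfolding h3 by (simp add: algebra_simps)
      also have "\<dots> = (?f b - ?f a)*(c-b)*(c-a) - (a+b)*((b-a)*(?f c - ?f b) - (c-b)*(?f b - ?f a))"
        unfolding h1 h2 ..
      also have "\<dots> = ?f b * (c^2 - a^2) - ?f a * (c^2 - b^2) - ?f c * (b^2 - a^2)"
        by (simp add: algebra_simps power2_eq_square)
      finally show ?thesis .
    qed
    hence "be * ((b-a)*(c-b)*(c-a)) \<ge> 0" using cc by simp
    moreover have "(b-a)*(c-b)*(c-a) > 0" using assms by simp
    ultimately show ?thesis by (simp add: zero_le_mult_iff)
  qed
  moreover have "\<forall>e\<in>{a,b,c}. e powr s = g + be * e + de * e^2"
  proof -
    have qa: "a powr s = g + be * a + de * a^2" by (simp add: g_def)
    have e1: "be + de * (a + b) = d1" by (simp add: be_def)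
    have e2: "d1 + de * (c - a) = d2" using assms by (simp add: de_def)
    have "(g + be * b + de * b^2) - (g + be * a + de * a^2) = (b - a) * (be + de * (a + b))"
      by (simp add: algebra_simps power2_eq_square)
    also have "\<dots> = b powr s - a powr s" using e1 assms by (simp add: d1_def)
    finally have qb: "b powr s = g + be * b + de * b^2" using qa by simp
    have "(g + be * c + de * c^2) - (g + be * b + de * b^2) = (c - b) * (be + de * (a + b) + de * (c - a))"
      by (simp add: algebra_simps power2_eq_square)
    also have "\<dots> = c powr s - b powr s" using e1 e2 assms by (simp add: d2_def)
    finally have qc: "c powr s = g + be * c + de * c^2" using qb by simp
    show ?thesis using qa qb qc by simp
  qed
  ultimately show ?thesis by blast
qed



definition orthonormal_fam :: "('n \<Rightarrow> real^'n) \<Rightarrow> bool" where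
  "orthonormal_fam x \<longleftrightarrow> (\<forall>i j. x i \<bullet> x j = (if i = j then 1 else 0))"

lemma outer_mv: "outer_prod u u *v v = (u \<bullet> v) *\<^sub>R u"
  by (simp add: vec_eq_iff outer_prod_def matrix_vector_mult_def inner_vec_def sum_distrib_left sum_distrib_right mult_ac)

lemma sum_mv: "(\<Sum>i\<in>I. M i) *v v = (\<Sum>i\<in>I. M i *v v)"
  by (induct I rule: infinite_finite_induct) (simp_all add: matrix_vector_mult_add_rdistrib)

lemma decomp_mv:
  "(\<Sum>i\<in>UNIV. c i *\<^sub>R outer_prod (x i) (x i)) *v v = (\<Sum>i\<in>UNIV. (c i * (x i \<bullet> v)) *\<^sub>R x i)"
  by (simp add: sum_mv scaleR_matrix_vector_assoc[symmetric] outer_mv)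

lemma decomp_entry:
  "(\<Sum>i\<in>UNIV. c i *\<^sub>R outer_prod (x i) (x i)) $ a $ b = (\<Sum>i\<in>UNIV. c i * (x i $ a * x i $ b))"
  by (simp add: outer_prod_def)

lemma orth_indep:
  fixes x :: "'n \<Rightarrow> real^'n"
  assumes "orthonormal_fam x"
  shows "independent (range x)" "inj x" "card (range x) = CARD('n)"
proof -
  have xx: "x i \<bullet> x j = (if i = j then 1 else 0)" for i j using assms by (simp add: orthonormal_fam_def)
  show inj: "inj x"
  proof (rule injI)
    fix i j assume "x i = x j"
    hence "x i \<bullet> x j = 1" using xx[of j j] by simp
    thus "i = j" using xx[of i j] by (auto split: if_splits)
  qed
  show "independent (range x)"
  proof (rule pairwise_orthogonal_independent)
    show "pairwise orthogonal (range x)"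
      using xx by (auto simp: pairwise_def orthogonal_def)
    show "0 \<notin> range x" using xx by (auto) (metis inner_zero_left zero_neq_one)
  qed
  show "card (range x) = CARD('n)" using inj by (simp add: card_image)
qed

lemma orth_expand:
  fixes x :: "'n \<Rightarrow> real^'n"
  assumes "orthonormal_fam x"
  shows "v = (\<Sum>i\<in>UNIV. (x i \<bullet> v) *\<^sub>R x i)"
proof -
  have xx: "x i \<bullet> x j = (if i = j then 1 else 0)" for i j using assms by (simp add: orthonormal_fam_def)
  note oi = orth_indep[OF assms]
  have "(UNIV :: (real^'n) set) \<subseteq> span (range x)"
    using card_eq_dim[of "range x" UNIV] oi finiteI_independent by auto
  hence "v \<in> span (range x)" by auto
  then obtain u where u: "v = (\<Sum>w\<in>range x. u w *\<^sub>R w)"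
    using span_finite[of "range x"] by auto
  also have "\<dots> = (\<Sum>i\<in>UNIV. u (x i) *\<^sub>R x i)"
    using oi(2) by (simp add: sum.reindex)
  finally have v: "v = (\<Sum>i\<in>UNIV. u (x i) *\<^sub>R x i)" .
  have "x j \<bullet> v = u (x j)" for j
    unfolding v by (simp add: inner_sum_right xx if_distrib cong: if_cong)
  thus ?thesis using v by simp
qed

lemma orth_cols:
  fixes x :: "'n \<Rightarrow> real^'n"
  assumes "orthonormal_fam x"
  shows "(\<Sum>i\<in>UNIV. x i $ a * x i $ b) = (if a = b then 1 else 0)"
proof -
  have "axis b (1::real) = (\<Sum>i\<in>UNIV. (x i \<bullet> axis b 1) *\<^sub>R x i)" by (rule orth_expand[OF assms])
  hence "axis b (1::real) $ a = (\<Sum>i\<in>UNIV. (x i \<bullet> axis b 1) *\<^sub>R x i) $ a" by simp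
  moreover have "x i \<bullet> axis b 1 = x i $ b" for i by (simp add: inner_axis)
  ultimately show ?thesis by (simp add: axis_def mult.commute)
qed



lemma sym_entry: "transpose A = A \<Longrightarrow> A $ i $ j = A $ j $ i"
  by (metis transpose_def vec_lambda_beta)

lemma sym_inner:
  fixes A :: "real^'n^'n"
  assumes "transpose A = A"
  shows "x \<bullet> (A *v y) = y \<bullet> (A *v x)"
proof -
  have "x \<bullet> (A *v y) = (\<Sum>i\<in>UNIV. \<Sum>j\<in>UNIV. x$i * A$i$j * y$j)"
    by (simp add: inner_vec_def matrix_vector_mult_def sum_distrib_left mult_ac)
  also have "\<dots> = (\<Sum>j\<in>UNIV. \<Sum>i\<in>UNIV. x$i * A$i$j * y$j)" by (rule sum.swap)
  also have "\<dots> = y \<bullet> (A *v x)"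
    by (simp add: inner_vec_def matrix_vector_mult_def sum_distrib_left mult_ac sym_entry[OF assms, of _ "_"])
  finally show ?thesis .
qed

lemma quad_expand:
  fixes A :: "real^'n^'n"
  assumes "transpose A = A"
  shows "(v + e *\<^sub>R w) \<bullet> (A *v (v + e *\<^sub>R w)) = v \<bullet> (A *v v) + 2 * e * (w \<bullet> (A *v v)) + e^2 * (w \<bullet> (A *v w))"
proof -
  have "v \<bullet> (A *v w) = w \<bullet> (A *v v)" by (rule sym_inner[OF assms])
  thus ?thesis
    by (simp add: matrix_vector_right_distrib matrix_vector_mult_scaleR inner_add_left inner_add_right
        algebra_simps power2_eq_square)
qed

lemma eps_trick:
  fixes p q :: real
  assumes "q \<ge> 0" "\<And>e. 2 * e * p + e^2 * q \<ge> 0"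
  shows "p = 0"
proof (rule ccontr)
  assume "p \<noteq> 0"
  define e where "e = - p / (q + 1)"
  have "2 * e * p + e^2 * q = p^2 * (- q - 2) / (q + 1)^2"
    using assms(1) by (simp add: e_def divide_simps power2_eq_square) (simp add: algebra_simps)
  also have "\<dots> < 0" using \<open>p \<noteq> 0\<close> assms(1)
    by (intro divide_neg_pos mult_pos_neg) auto
  finally show False using assms(2)[of e] by simp
qed

lemma spectral_sub:
  fixes A :: "real^'n^'n"
  assumes sym: "transpose A = A"
  shows "subspace S \<Longrightarrow> (\<forall>v\<in>S. A *v v \<in> S) \<Longrightarrow>
    \<exists>B. B \<subseteq> S \<and> S \<subseteq> span B \<and> pairwise orthogonal B \<and> (\<forall>b\<in>B. norm b = 1 \<and> (\<exists>l. A *v b = l *\<^sub>R b))"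
proof (induction "dim S" arbitrary: S rule: less_induct)
  case less
  note sub = less.prems(1) and inv = less.prems(2)
  show ?case
  proof (cases "S \<subseteq> {0}")
    case True
    thus ?thesis by (intro exI[of _ "{}"]) auto
  next
    case False
    then obtain u where u: "u \<in> S" "u \<noteq> 0" by auto
    define K where "K = S \<inter> sphere 0 1"
    have "compact K" unfolding K_def
      using compact_Int_closed[OF compact_sphere[of 0 1] closed_subspace[OF sub]] by (simp add: Int_commute)
    moreover have "(1 / norm u) *\<^sub>R u \<in> K" using u sub
      by (simp add: K_def subspace_scale)
    hence "K \<noteq> {}" by auto
    moreover have "continuous_on K (\<lambda>v. v \<bullet> (A *v v))"
      by (intro continuous_on_inner continuous_on_id matrix_vector_mult_linear_continuous_on)
    ultimately obtain v where vK: "v \<in> K" and vmax: "\<And>w. w \<in> K \<Longrightarrow> w \<bullet> (A *v w) \<le> v \<bullet> (A *v v)"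
      using continuous_attains_sup[of K "\<lambda>v. v \<bullet> (A *v v)"] by blast
    define m where "m = v \<bullet> (A *v v)"
    have vS: "v \<in> S" and vn: "norm v = 1" using vK by (auto simp: K_def)
    have vv: "v \<bullet> v = 1" using vn by (simp add: norm_eq_1)
    have Qpos: "w \<bullet> (A *v w) \<le> m * (w \<bullet> w)" if "w \<in> S" for w
    proof (cases "w = 0")
      case False
      let ?w = "(1 / norm w) *\<^sub>R w"
      have "?w \<in> K" using that False sub by (simp add: K_def subspace_scale)
      hence "?w \<bullet> (A *v ?w) \<le> m" unfolding m_def by (rule vmax)
      hence "(w \<bullet> (A *v w)) / (norm w)^2 \<le> m"
        by (simp add: matrix_vector_mult_scaleR power2_eq_square)
      hence "w \<bullet> (A *v w) \<le> m * (norm w)^2" using False by (simp add: divide_le_eq)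
      thus ?thesis by (simp add: power2_norm_eq_inner)
    qed simp
    define Bv where "Bv = m *\<^sub>R v - A *v v"
    have BvS: "Bv \<in> S" unfolding Bv_def using vS inv sub by (simp add: subspace_diff subspace_scale)
    have orthBv: "w \<bullet> Bv = 0" if wS: "w \<in> S" for w
    proof -
      let ?p = "w \<bullet> Bv" and ?q = "m * (w \<bullet> w) - w \<bullet> (A *v w)"
      show ?thesis
      proof (rule eps_trick[of ?q ?p])
        show "0 \<le> ?q" using Qpos[OF wS] by simp
        fix e :: real
        have "v + e *\<^sub>R w \<in> S" using vS wS sub by (simp add: subspace_add subspace_scale)
        hence "(v + e *\<^sub>R w) \<bullet> (A *v (v + e *\<^sub>R w)) \<le> m * ((v + e *\<^sub>R w) \<bullet> (v + e *\<^sub>R w))"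
          by (rule Qpos)
        hence "v \<bullet> (A *v v) + 2 * e * (w \<bullet> (A *v v)) + e^2 * (w \<bullet> (A *v w))
            \<le> m * (v \<bullet> v + 2 * e * (w \<bullet> v) + e^2 * (w \<bullet> w))"
          unfolding quad_expand[OF sym]
          by (simp add: inner_add_left inner_add_right inner_commute power2_eq_square algebra_simps)
        thus "0 \<le> 2 * e * ?p + e^2 * ?q"
          by (simp add: Bv_def inner_diff_right vv m_def algebra_simps)
      qed
    qed
    have "Bv \<bullet> Bv = 0" by (rule orthBv[OF BvS])
    hence eig: "A *v v = m *\<^sub>R v" by (simp add: Bv_def)
    define S' where "S' = S \<inter> {w. v \<bullet> w = 0}"
    have sub': "subspace S'" unfolding S'_def
      using subspace_inter[OF sub subspace_orthogonal_to_vector[of v]] by (simp add: orthogonal_def)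
    have inv': "\<forall>w\<in>S'. A *v w \<in> S'"
    proof
      fix w assume w: "w \<in> S'"
      have "v \<bullet> (A *v w) = w \<bullet> (A *v v)" by (rule sym_inner[OF sym])
      also have "\<dots> = 0" using w by (simp add: eig S'_def inner_commute)
      finally show "A *v w \<in> S'" using w inv by (simp add: S'_def)
    qed
    have "dim S' < dim S"
    proof (rule dim_psubset)
      have "v \<notin> S'" using vv by (simp add: S'_def)
      hence "S' \<subset> S" using vS unfolding S'_def by blast
      moreover have e: "span S' = S'" "span S = S" using sub sub' by (auto intro!: span_subspace span_superset)
      ultimately show "span S' \<subset> span S" by (simp only: e)
    qed
    then obtain B' where B': "B' \<subseteq> S'" "S' \<subseteq> span B'" "pairwise orthogonal B'"
      "\<forall>b\<in>B'. norm b = 1 \<and> (\<exists>l. A *v b = l *\<^sub>R b)"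
      using less.hyps[OF _ sub' inv'] by blast
    show ?thesis
    proof (intro exI[of _ "insert v B'"] conjI)
      show "insert v B' \<subseteq> S" using vS B'(1) by (auto simp: S'_def)
      show "pairwise orthogonal (insert v B')"
        using B'(1,3) by (auto simp: pairwise_insert S'_def orthogonal_def inner_commute)
      show "\<forall>b\<in>insert v B'. norm b = 1 \<and> (\<exists>l. A *v b = l *\<^sub>R b)"
        using B'(4) vn eig by auto
      show "S \<subseteq> span (insert v B')"
      proof
        fix w assume wS: "w \<in> S"
        have "w - (v \<bullet> w) *\<^sub>R v \<in> S'" using wS vS sub vv
          by (simp add: S'_def subspace_diff subspace_scale inner_diff_right)
        hence "w - (v \<bullet> w) *\<^sub>R v \<in> span (insert v B')"
          using B'(2) span_mono[of B' "insert v B'"] by blast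
        moreover have "(v \<bullet> w) *\<^sub>R v \<in> span (insert v B')"
          by (simp add: span_base span_mul)
        ultimately have "(w - (v \<bullet> w) *\<^sub>R v) + (v \<bullet> w) *\<^sub>R v \<in> span (insert v B')"
          by (rule span_add)
        thus "w \<in> span (insert v B')" by simp
      qed
    qed
  qed
qed



lemma spectral:
  fixes A :: "real^'n^'n"
  assumes sym: "transpose A = A"
  shows "\<exists>x lam. orthonormal_fam x \<and> (\<forall>i. A *v x i = lam i *\<^sub>R x i)"
proof -
  obtain B where B: "UNIV \<subseteq> span B" "pairwise orthogonal B"
      "\<forall>b\<in>B. norm b = 1 \<and> (\<exists>l. A *v b = l *\<^sub>R b)"
    using spectral_sub[OF sym, of UNIV] by auto
  have ind: "independent B"
    using B by (intro pairwise_orthogonal_independent) auto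
  have fin: "finite B" using ind by (rule finiteI_independent)
  have "card B = dim (UNIV :: (real^'n) set)"
    using basis_card_eq_dim[of B UNIV] B(1) ind by auto
  hence "card B = CARD('n)" by simp
  hence "card (UNIV :: 'n set) = card B" by simp
  then obtain g where g: "bij_betw g (UNIV :: 'n set) B"
    using finite_same_card_bij[of "UNIV :: 'n set" B] fin by auto
  have gB: "g i \<in> B" for i using g by (auto simp: bij_betw_def)
  have ginj: "g i = g j \<Longrightarrow> i = j" for i j using g by (auto simp: bij_betw_def inj_def)
  have "orthonormal_fam g"
    unfolding orthonormal_fam_def
  proof (intro allI)
    fix i j
    show "g i \<bullet> g j = (if i = j then 1 else 0)"
    proof (cases "i = j")
      case True thus ?thesis using B(3) gB[of j] by (simp add: norm_eq_1)
    next
      case False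
      hence "g i \<noteq> g j" using ginj by blast
      thus ?thesis using False B(2) gB[of i] gB[of j] by (auto simp: pairwise_def orthogonal_def)
    qed
  qed
  moreover have "\<forall>i. A *v g i = (SOME l. A *v g i = l *\<^sub>R g i) *\<^sub>R g i"
    using B(3) gB by (metis (mono_tags, lifting) someI_ex)
  ultimately show ?thesis
    by (intro exI[of _ g] exI[of _ "\<lambda>i. SOME l. A *v g i = l *\<^sub>R g i"]) blast
qed

lemma A_mv:
  fixes A :: "real^'n^'n" and x :: "'n \<Rightarrow> real^'n"
  assumes "orthonormal_fam x" "\<forall>i. A *v x i = lam i *\<^sub>R x i"
  shows "A *v v = (\<Sum>i\<in>UNIV. (lam i * (x i \<bullet> v)) *\<^sub>R x i)"
proof -
  have "A *v v = A *v (\<Sum>i\<in>UNIV. (x i \<bullet> v) *\<^sub>R x i)" using orth_expand[OF assms(1), of v] by simp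
  also have "\<dots> = (\<Sum>i\<in>UNIV. (x i \<bullet> v) *\<^sub>R (A *v x i))"
    by (simp add: linear_sum[OF matrix_vector_mul_linear] matrix_vector_mult_scaleR)
  also have "\<dots> = (\<Sum>i\<in>UNIV. (lam i * (x i \<bullet> v)) *\<^sub>R x i)" using assms(2) by (simp add: mult.commute)
  finally show ?thesis .
qed

lemma decomp_exists:
  fixes A :: "real^'n^'n"
  assumes "psd_mat A"
  shows "\<exists>lam x. psd_eigendecomp A lam x"
proof -
  have sym: "transpose A = A" and pos: "\<And>v. 0 \<le> v \<bullet> (A *v v)"
    using assms by (auto simp: psd_mat_def symmetric_mat_def)
  obtain x lam where x: "orthonormal_fam x" and ev: "\<forall>i. A *v x i = lam i *\<^sub>R x i"
    using spectral[OF sym] by blast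
  have xx: "x i \<bullet> x i = 1" for i using x by (simp add: orthonormal_fam_def)
  have "0 \<le> lam i" for i using pos[of "x i"] ev xx by simp
  moreover have "A = (\<Sum>i\<in>UNIV. lam i *\<^sub>R outer_prod (x i) (x i))"
    unfolding matrix_eq by (simp add: decomp_mv A_mv[OF x ev])
  ultimately show ?thesis using x unfolding psd_eigendecomp_def orthonormal_fam_def by blast
qed

definition ent :: "('n \<Rightarrow> real^'n) \<Rightarrow> ('n \<Rightarrow> real) \<Rightarrow> 'n \<Rightarrow> 'n \<Rightarrow> real" where
  "ent x f a b = (\<Sum>i\<in>UNIV. f i * (x i $ a * x i $ b))"

lemma ent_mult:
  fixes x :: "'n \<Rightarrow> real^'n"
  assumes "orthonormal_fam x"
  shows "(\<Sum>c\<in>UNIV. ent x f a c * ent x g c b) = ent x (\<lambda>i. f i * g i) a b"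
proof -
  have "(\<Sum>c\<in>UNIV. ent x f a c * ent x g c b) =
      (\<Sum>c\<in>UNIV. \<Sum>i\<in>UNIV. \<Sum>j\<in>UNIV. (f i * x i $ a * g j * x j $ b) * (x i $ c * x j $ c))"
    by (simp add: ent_def sum_product mult_ac)
  also have "\<dots> = (\<Sum>i\<in>UNIV. \<Sum>c\<in>UNIV. \<Sum>j\<in>UNIV. (f i * x i $ a * g j * x j $ b) * (x i $ c * x j $ c))"
    by (rule sum.swap)
  also have "\<dots> = (\<Sum>i\<in>UNIV. \<Sum>j\<in>UNIV. \<Sum>c\<in>UNIV. (f i * x i $ a * g j * x j $ b) * (x i $ c * x j $ c))"
    by (rule sum.cong[OF refl], rule sum.swap)
  also have "\<dots> = (\<Sum>i\<in>UNIV. \<Sum>j\<in>UNIV. (f i * x i $ a * g j * x j $ b) * (x i \<bullet> x j))"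
    by (simp add: inner_vec_def sum_distrib_left)
  also have "\<dots> = (\<Sum>i\<in>UNIV. f i * x i $ a * g i * x i $ b)"
  proof -
    have xx: "x i \<bullet> x j = (if i = j then 1 else 0)" for i j using assms by (simp add: orthonormal_fam_def)
    have "(\<Sum>j\<in>UNIV. f i * x i $ a * g j * x j $ b * (if i = j then 1 else 0)) = f i * x i $ a * g i * x i $ b" for i
      by (simp add: if_distrib[of "\<lambda>z. _ * z"] cong: if_cong)
    thus ?thesis by (simp add: xx)
  qed
  also have "\<dots> = ent x (\<lambda>i. f i * g i) a b" by (simp add: ent_def mult_ac)
  finally show ?thesis .
qed



lemma three_sort:
  fixes x y z :: real
  assumes "x \<noteq> y" "y \<noteq> z" "x \<noteq> z"
  shows "\<exists>a b c. a < b \<and> b < c \<and> {x,y,z} = {a,b,c}"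
proof -
  have "x < y \<or> y < x" "y < z \<or> z < y" "x < z \<or> z < x" using assms by auto
  thus ?thesis by (metis insert_commute)
qed

lemma interp_set:
  fixes E :: "real set"
  assumes "finite E" "card E \<le> 3" "\<forall>e\<in>E. 0 \<le> e" "1 \<le> s" "s \<le> 2"
  shows "\<exists>g be de. 0 \<le> be \<and> 0 \<le> de \<and> (\<forall>e\<in>E. e powr s = g + be * e + de * e^2)"
proof -
  have "\<exists>a b c. 0 \<le> a \<and> a < b \<and> b < c \<and> E \<subseteq> {a,b,c}"
  proof -
    have "card E = 0 \<or> card E = 1 \<or> card E = 2 \<or> card E = 3" using assms(2) by auto
    moreover
    { assume "card E = 0" hence "E = {}" using assms(1) by simp
      hence ?thesis by (intro exI[of _ 0] exI[of _ 1] exI[of _ 2]) auto }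
    moreover
    { assume "card E = 1" then obtain e where "E = {e}" by (auto simp: card_1_singleton_iff)
      hence ?thesis using assms(3) by (intro exI[of _ e] exI[of _ "e+1"] exI[of _ "e+2"]) auto }
    moreover
    { assume "card E = 2" then obtain e f where ef: "E = {e,f}" "e \<noteq> f" by (auto simp: card_2_iff)
      have ?thesis
      proof (cases "e < f")
        case True thus ?thesis using ef assms(3) by (intro exI[of _ e] exI[of _ f] exI[of _ "f+1"]) auto
      next
        case False thus ?thesis using ef assms(3) by (intro exI[of _ f] exI[of _ e] exI[of _ "e+1"]) auto
      qed }
    moreover
    { assume "card E = 3" then obtain e f h where efh: "E = {e,f,h}" "e \<noteq> f" "f \<noteq> h" "e \<noteq> h"
        by (auto simp: card_3_iff)
      then obtain a b c where abc: "a < b" "b < c" "{e,f,h} = {a,b,c}" using three_sort by blast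
      have "a \<in> E" using abc efh by auto
      hence ?thesis using abc efh assms(3) by auto }
    ultimately show ?thesis by blast
  qed
  then obtain a b c where abc: "0 \<le> a" "a < b" "b < c" "E \<subseteq> {a,b,c}" by blast
  from interp3[OF abc(1-3) assms(4,5)] obtain g be de where
    "0 \<le> be" "0 \<le> de" "\<forall>e\<in>{a,b,c}. e powr s = g + be * e + de * e^2" by blast
  thus ?thesis using abc(4) by blast
qed

theorem theorem5p3:
  fixes A :: "real^'n^'n"
  assumes "doubly_nonnegative A"
    and "card (eigenvalues_of A) \<le> 3"
    and "(t::real) \<ge> 1"
  shows "doubly_nonnegative (mat_rpow A t)"
proof -
  have psdA: "psd_mat A" and nnA: "\<And>i j. 0 \<le> A $ i $ j"
    using assms(1) by (auto simp: doubly_nonnegative_def nonneg_mat_def)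
  have ex: "\<exists>B. \<exists>lam x. psd_eigendecomp A lam x \<and>
       B = (\<Sum>i\<in>UNIV. (lam i powr t) *\<^sub>R outer_prod (x i) (x i))"
    using decomp_exists[OF psdA] by blast
  obtain lam x where dec: "psd_eigendecomp A lam x"
    and C: "mat_rpow A t = (\<Sum>i\<in>UNIV. (lam i powr t) *\<^sub>R outer_prod (x i) (x i))"
    using someI_ex[OF ex] unfolding mat_rpow_def by blast
  have orth: "orthonormal_fam x" and lam0: "\<And>i. 0 \<le> lam i"
    and Aeq: "A = (\<Sum>i\<in>UNIV. lam i *\<^sub>R outer_prod (x i) (x i))"
    using dec by (auto simp: psd_eigendecomp_def orthonormal_fam_def)
  have xx: "x i \<bullet> x j = (if i = j then 1 else 0)" for i j using orth by (simp add: orthonormal_fam_def)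
  have ev: "\<forall>j. A *v x j = lam j *\<^sub>R x j"
  proof
    fix j
    have "A *v x j = (\<Sum>i\<in>UNIV. (lam i * (x i \<bullet> x j)) *\<^sub>R x i)"
      by (subst Aeq) (rule decomp_mv)
    also have "\<dots> = (\<Sum>i\<in>UNIV. (if i = j then lam j *\<^sub>R x j else 0))"
      by (rule sum.cong) (auto simp: xx)
    also have "\<dots> = lam j *\<^sub>R x j" by simp
    finally show "A *v x j = lam j *\<^sub>R x j" .
  qed
  have Aent: "A $ a $ b = ent x lam a b" for a b
    by (subst Aeq) (simp add: decomp_entry ent_def outer_prod_def)
  have eig: "eigenvalues_of A = range lam"
  proof
    show "range lam \<subseteq> eigenvalues_of A"
    proof
      fix l assume "l \<in> range lam"
      then obtain j where "l = lam j" by auto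
      moreover have "x j \<noteq> 0" using xx[of j j] by auto
      ultimately show "l \<in> eigenvalues_of A" using ev by (auto simp: eigenvalues_of_def)
    qed
    show "eigenvalues_of A \<subseteq> range lam"
    proof
      fix l assume "l \<in> eigenvalues_of A"
      then obtain v where v: "v \<noteq> 0" "A *v v = l *\<^sub>R v" by (auto simp: eigenvalues_of_def)
      have "x j \<bullet> (A *v v) = lam j * (x j \<bullet> v)" for j
        unfolding A_mv[OF orth ev] by (simp add: inner_sum_right xx if_distrib[of "\<lambda>z. _ * z"] cong: if_cong)
      hence eq: "l * (x j \<bullet> v) = lam j * (x j \<bullet> v)" for j using v(2) by simp
      show "l \<in> range lam"
      proof (rule ccontr)
        assume "l \<notin> range lam"
        hence "x j \<bullet> v = 0" for j using eq[of j] by auto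
        hence "v = 0" using orth_expand[OF orth, of v] by simp
        thus False using v(1) by simp
      qed
    qed
  qed
  have cardE: "card (range lam) \<le> 3" using assms(2) eig by simp
  define k where "k = nat \<lfloor>t\<rfloor> - 1"
  define s where "s = t - real k"
  have fl: "1 \<le> \<lfloor>t\<rfloor>" using assms(3) by linarith
  hence ik: "int k = \<lfloor>t\<rfloor> - 1" unfolding k_def by linarith
  have rk: "real k = real_of_int \<lfloor>t\<rfloor> - 1"
    by (metis ik of_int_1 of_int_diff of_int_of_nat_eq)
  have s1: "1 \<le> s" "s \<le> 2" unfolding s_def rk by linarith+
  have split: "lam i powr t = lam i ^ k * lam i powr s" for i
  proof (cases "lam i = 0")
    case True thus ?thesis using s1 by simp
  next
    case False
    hence "lam i > 0" using lam0[of i] by simp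
    hence "lam i powr t = lam i powr real k * lam i powr s" by (simp add: s_def flip: powr_add)
    thus ?thesis using \<open>lam i > 0\<close> by (simp add: powr_realpow)
  qed
  obtain g be de where gbd: "0 \<le> be" "0 \<le> de" "\<forall>e\<in>range lam. e powr s = g + be * e + de * e^2"
    using interp_set[of "range lam" s] cardE lam0 s1 by auto
  have R: "0 \<le> ent x (\<lambda>i. lam i powr s) a b" for a b
  proof (cases "a = b")
    case True
    thus ?thesis unfolding ent_def by (intro sum_nonneg) simp
  next
    case False
    have "ent x (\<lambda>i. lam i powr s) a b = ent x (\<lambda>i. g + be * lam i + de * (lam i * lam i)) a b"
      using gbd(3) unfolding ent_def by (simp add: power2_eq_square)
    also have "\<dots> = g * ent x (\<lambda>i. 1) a b + be * ent x lam a b + de * ent x (\<lambda>i. lam i * lam i) a b"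
      by (simp add: ent_def algebra_simps sum.distrib sum_distrib_left)
    also have "ent x (\<lambda>i. 1) a b = 0" using orth_cols[OF orth, of a b] False by (simp add: ent_def)
    also have "ent x (\<lambda>i. lam i * lam i) a b = (\<Sum>c\<in>UNIV. A $ a $ c * A $ c $ b)"
      by (simp add: Aent ent_mult[OF orth])
    finally show ?thesis using gbd(1,2) nnA Aent
      by (auto intro!: add_nonneg_nonneg mult_nonneg_nonneg sum_nonneg)
  qed
  have P: "0 \<le> ent x (\<lambda>i. lam i ^ m) a b" if "m \<ge> 1" for m a b
    using that
  proof (induction m arbitrary: a b rule: nat_induct_at_least)
    case base thus ?case using nnA Aent by simp
  next
    case (Suc m)
    have "ent x (\<lambda>i. lam i ^ Suc m) a b = (\<Sum>c\<in>UNIV. ent x lam a c * ent x (\<lambda>i. lam i ^ m) c b)"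
      by (simp add: ent_mult[OF orth])
    thus ?case using nnA Aent Suc.IH by (auto intro!: sum_nonneg mult_nonneg_nonneg)
  qed
  have Cent: "mat_rpow A t $ a $ b = ent x (\<lambda>i. lam i ^ k * lam i powr s) a b" for a b
    unfolding C by (simp add: decomp_entry ent_def split outer_prod_def)
  have nn: "0 \<le> mat_rpow A t $ a $ b" for a b
  proof (cases "k = 0")
    case True thus ?thesis using R by (simp add: Cent)
  next
    case False
    have "mat_rpow A t $ a $ b = (\<Sum>c\<in>UNIV. ent x (\<lambda>i. lam i ^ k) a c * ent x (\<lambda>i. lam i powr s) c b)"
      by (simp add: Cent ent_mult[OF orth])
    thus ?thesis using P[of k] False R by (auto intro!: sum_nonneg mult_nonneg_nonneg)
  qed
  have symC: "symmetric_mat (mat_rpow A t)"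
    unfolding symmetric_mat_def by (simp add: vec_eq_iff transpose_def C decomp_entry outer_prod_def mult.commute)
  have psdC: "psd_mat (mat_rpow A t)"
    unfolding psd_mat_def
  proof (intro conjI symC allI)
    fix v
    show "0 \<le> v \<bullet> (mat_rpow A t *v v)"
      unfolding C decomp_mv
      by (simp add: inner_sum_right inner_commute)
        (rule sum_nonneg, metis mult.assoc mult_nonneg_nonneg powr_ge_zero zero_le_square)
  qed
  show ?thesis using symC psdC nn by (simp add: doubly_nonnegative_def nonneg_mat_def)
qed


end
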